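(* For each $n$, let $Y_i=f_0(\mathbf X_i)+\epsilon_i$ with $\boldsymbol\epsilon\sim\mathcal N(\mathbf 0,\boldsymbol\Sigma_n)$, all eigenvalues of $\boldsymbol\Sigma_n$ in $[\Psi_{low},\Psi_{high}]$ ($0<\Psi_{low}\le\Psi_{high}<\infty$), $f_0$ continuous, covariates $\mathbf X_i$ fixed in a compact subset of $\mathbb R^d$, and let $\mathbf Q_n$ be symmetric positive definite with all eigenvalues of $(\boldsymbol\Sigma_n^{1/2})^\top\mathbf Q_n\boldsymbol\Sigma_n^{1/2}$ in $(\Lambda_{low},\Lambda_{high})$, $0<\Lambda_{low}\le1\le\Lambda_{high}<\infty$. Let $L_n(f)=\mathbb E\big[\frac1n(\mathbf Y-\mathbf f(\mathbf X))^\top\mathbf Q_n(\mathbf Y-\mathbf f(\mathbf X))\big]$ and let $\pi_{r_n}f_0$ be the projection of $f_0$ onto $\mathcal F_n$ with respect to $\|\cdot\|_n$. Then for any $n$ and any $\delta\ge6\frac{\Psi_{high}\Lambda_{high}}{\Psi_{low}\Lambda_{low}}\|f_0-\pi_{r_n}f_0\|_n$, $$\inf_{f:\ \frac\delta2<\|f-\pi_{r_n}f_0\|_n<\delta}L_n(f)-L_n(\pi_{r_n}f_0)\ge\frac{\Lambda_{low}}{12\Psi_{high}}\delta^2.$$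
   Context: $\|f\|_n^2=\frac1n\sum_if(\mathbf X_i)^2$, $\mathbf f(\mathbf X)=(f(\mathbf X_i))_i$, $\boldsymbol\Sigma_n^{1/2}(\boldsymbol\Sigma_n^{1/2})^\top=\boldsymbol\Sigma_n$. $\mathcal F_n=\{\alpha_0+\sum_{j=1}^{r_n}\alpha_j\sigma(\boldsymbol\gamma_j^\top\mathbf x+\gamma_{0,j}):\sum_{j=0}^{r_n}|\alpha_j|\le V_n,\ \max_j\sum_{i=0}^d|\gamma_{i,j}|\le M_n\}$ for a bounded Lipschitz activation $\sigma$. The infimum is over real-valued functions $f$ on the covariate domain. *)

theory Defs
  imports "HOL-Analysis.Analysis" "HOL-Probability.Probability"
begin

text \<open>Vectors in R^n are functions nat => real on indices {..<n};
  n x n matrices are functions nat => nat => real on {..<n} x {..<n}.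
  Covariates live in R^d, modelled by the finite index type 'd.\<close>

definition emp_norm :: "nat \<Rightarrow> (nat \<Rightarrow> real^'d) \<Rightarrow> (real^'d \<Rightarrow> real) \<Rightarrow> real" where
  "emp_norm n X f = sqrt ((1 / real n) * (\<Sum>i<n. (f (X i))\<^sup>2))"

definition mat_eigenvalue :: "nat \<Rightarrow> (nat \<Rightarrow> nat \<Rightarrow> real) \<Rightarrow> real \<Rightarrow> bool" where
  "mat_eigenvalue n A lam \<longleftrightarrow>
     (\<exists>v :: nat \<Rightarrow> real. (\<exists>i<n. v i \<noteq> 0) \<and> (\<forall>i<n. (\<Sum>j<n. A i j * v j) = lam * v i))"

definition mat_symmetric :: "nat \<Rightarrow> (nat \<Rightarrow> nat \<Rightarrow> real) \<Rightarrow> bool" where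
  "mat_symmetric n A \<longleftrightarrow> (\<forall>i<n. \<forall>j<n. A i j = A j i)"

definition mat_pos_def :: "nat \<Rightarrow> (nat \<Rightarrow> nat \<Rightarrow> real) \<Rightarrow> bool" where
  "mat_pos_def n A \<longleftrightarrow> mat_symmetric n A \<and>
     (\<forall>v :: nat \<Rightarrow> real. (\<exists>i<n. v i \<noteq> 0) \<longrightarrow> (\<Sum>i<n. \<Sum>j<n. v i * A i j * v j) > 0)"

definition mat_sandwich :: "nat \<Rightarrow> (nat \<Rightarrow> nat \<Rightarrow> real) \<Rightarrow> (nat \<Rightarrow> nat \<Rightarrow> real) \<Rightarrow> nat \<Rightarrow> nat \<Rightarrow> real" where
  "mat_sandwich n S Q = (\<lambda>i j. \<Sum>k<n. \<Sum>l<n. S k i * Q k l * S l j)"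

text \<open>Multivariate normal N(0, S S^T) on R^n: law of S Z with Z a vector of n
  independent standard normal variables.\<close>
definition gaussian_vec :: "nat \<Rightarrow> (nat \<Rightarrow> nat \<Rightarrow> real) \<Rightarrow> (nat \<Rightarrow> real) measure" where
  "gaussian_vec n S =
     distr (PiM {..<n} (\<lambda>_. density lborel std_normal_density)) (PiM {..<n} (\<lambda>_. borel))
       (\<lambda>z. \<lambda>i\<in>{..<n}. \<Sum>j<n. S i j * z j)"

definition risk :: "nat \<Rightarrow> (nat \<Rightarrow> real^'d) \<Rightarrow> (real^'d \<Rightarrow> real) \<Rightarrow> (nat \<Rightarrow> nat \<Rightarrow> real)
    \<Rightarrow> (nat \<Rightarrow> nat \<Rightarrow> real) \<Rightarrow> (real^'d \<Rightarrow> real) \<Rightarrow> real" where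
  "risk n X f0 S Q f =
     (\<integral>eps. (1 / real n) *
        (\<Sum>i<n. \<Sum>j<n. (f0 (X i) + eps i - f (X i)) * Q i j * (f0 (X j) + eps j - f (X j)))
      \<partial>gaussian_vec n S)"

definition nn_class :: "(real \<Rightarrow> real) \<Rightarrow> nat \<Rightarrow> real \<Rightarrow> real \<Rightarrow> (real^'d \<Rightarrow> real) set" where
  "nn_class \<sigma> r V M =
     {f. \<exists>(\<alpha> :: nat \<Rightarrow> real) (\<gamma> :: nat \<Rightarrow> real^'d) (\<gamma>0 :: nat \<Rightarrow> real).
           (\<Sum>j\<le>r. \<bar>\<alpha> j\<bar>) \<le> V \<and>
           (\<forall>j\<in>{1..r}. \<bar>\<gamma>0 j\<bar> + (\<Sum>i\<in>UNIV. \<bar>\<gamma> j $ i\<bar>) \<le> M) \<and>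
           f = (\<lambda>x. \<alpha> 0 + (\<Sum>j=1..r. \<alpha> j * \<sigma> (\<gamma> j \<bullet> x + \<gamma>0 j)))}"

end

theory Submission
  imports Defs
begin


abbreviation "stdN \<equiv> density lborel std_normal_density"

lemma stdN_facts:
  shows "integrable stdN (\<lambda>x. x)" "integral\<^sup>L stdN (\<lambda>x. x) = 0" "integrable stdN (\<lambda>x. x^2)"
    "prob_space stdN"
proof -
  have m: "std_normal_density \<in> borel_measurable lborel" by measurable
  have nn: "AE x in lborel. 0 \<le> std_normal_density x" by (simp add: normal_density_nonneg)
  show "integrable stdN (\<lambda>x. x)"
    using integrable_std_normal_moment[of 1] by (subst integrable_density[OF _ m nn]) auto
  show "integrable stdN (\<lambda>x. x^2)"
    using integrable_std_normal_moment[of 2] by (subst integrable_density[OF _ m nn]) auto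
  show "integral\<^sup>L stdN (\<lambda>x. x) = 0"
    using integral_std_normal_moment_odd[of 0] by (subst integral_density[OF _ m nn]) auto
  show "prob_space stdN" by (rule prob_space_normal_density) simp
qed

abbreviation "stdP n \<equiv> PiM {..<(n::nat)} (\<lambda>_. stdN)"

lemma stdP_comp_meas:
  assumes "j < n" shows "(\<lambda>z. z j) \<in> borel_measurable (stdP n)"
proof -
  have "(\<lambda>z. z j) \<in> stdP n \<rightarrow>\<^sub>M stdN"
    using assms by (intro measurable_component_singleton) auto
  moreover have "sets stdN = sets borel" by simp
  ultimately show ?thesis using measurable_cong_sets[OF refl, of stdN borel "stdP n"] by simp
qed

lemma stdP_facts:
  assumes "j < n"
  shows "integrable (stdP n) (\<lambda>z. z j)" "integral\<^sup>L (stdP n) (\<lambda>z. z j) = 0"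
    "integrable (stdP n) (\<lambda>z. (z j)^2)"
proof -
  have ps: "\<And>i. i \<in> {..<n} \<Longrightarrow> prob_space stdN" using stdN_facts by simp
  have jn: "j \<in> {..<n}" using assms by simp
  have d: "distr (stdP n) stdN (\<lambda>z. z j) = stdN"
    by (rule distr_PiM_component[OF ps jn])
  have meas: "(\<lambda>z. z j) \<in> measurable (stdP n) stdN"
    by (rule measurable_component_singleton[OF jn])
  have bm1: "(\<lambda>x::real. x) \<in> borel_measurable stdN" by (simp add: measurable_ident_sets)
  have bm2: "(\<lambda>x::real. x^2) \<in> borel_measurable stdN" by (simp add: measurable_ident_sets)
  show "integrable (stdP n) (\<lambda>z. z j)"
    using stdN_facts(1) integrable_distr_eq[OF meas bm1] unfolding d by simp
  show "integrable (stdP n) (\<lambda>z. (z j)^2)"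
    using stdN_facts(3) integrable_distr_eq[OF meas bm2] unfolding d by simp
  show "integral\<^sup>L (stdP n) (\<lambda>z. z j) = 0"
    using stdN_facts(2) integral_distr[OF meas bm1] unfolding d by simp
qed
lemma stdP_prod:
  assumes "j < n" "k < n"
  shows "integrable (stdP n) (\<lambda>z. z j * z k)"
proof (rule Bochner_Integration.integrable_bound)
  show "integrable (stdP n) (\<lambda>z. (z j)^2 + (z k)^2)"
    using stdP_facts assms by auto
  show "(\<lambda>z. z j * z k) \<in> borel_measurable (stdP n)"
    using stdP_comp_meas[OF assms(1)] stdP_comp_meas[OF assms(2)] by (rule borel_measurable_times)
  show "AE z in stdP n. norm (z j * z k) \<le> norm ((z j)^2 + (z k)^2)"
  proof (rule AE_I2)
    fix z :: "nat \<Rightarrow> real"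
    have "2 * \<bar>z j * z k\<bar> \<le> (z j)^2 + (z k)^2"
      using sum_squares_bound[of "\<bar>z j\<bar>" "\<bar>z k\<bar>"] by (simp add: abs_mult power2_eq_square)
    then show "norm (z j * z k) \<le> norm ((z j)^2 + (z k)^2)" by simp
  qed
qed

lemma G_facts:
  fixes S :: "nat \<Rightarrow> nat \<Rightarrow> real"
  assumes "i < n" "j < n"
  shows "integrable (gaussian_vec n S) (\<lambda>e. e i)"
    "integral\<^sup>L (gaussian_vec n S) (\<lambda>e. e i) = 0"
    "integrable (gaussian_vec n S) (\<lambda>e. e i * e j)"
proof -
  define T where "T = (\<lambda>z. \<lambda>i\<in>{..<n}. \<Sum>j<n. S i j * (z::nat\<Rightarrow>real) j)"
  have Tm: "T \<in> measurable (stdP n) (PiM {..<n} (\<lambda>_. borel))"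
    unfolding T_def
    by (intro measurable_restrict borel_measurable_sum borel_measurable_times borel_measurable_const stdP_comp_meas) auto
  have G: "gaussian_vec n S = distr (stdP n) (PiM {..<n} (\<lambda>_. borel)) T"
    unfolding gaussian_vec_def T_def ..
  have cm: "\<And>k. k < n \<Longrightarrow> (\<lambda>e. e k) \<in> borel_measurable (PiM {..<n} (\<lambda>_. (borel::real measure)))"
    by (intro measurable_component_singleton) auto
  have Ti: "\<And>k z. k < n \<Longrightarrow> T z k = (\<Sum>j<n. S k j * z j)" unfolding T_def by simp
  show "integrable (gaussian_vec n S) (\<lambda>e. e i)"
    unfolding G using assms
    by (subst integrable_distr_eq[OF Tm cm]) (auto simp: Ti intro!: Bochner_Integration.integrable_sum integrable_mult_right stdP_facts)
  show "integral\<^sup>L (gaussian_vec n S) (\<lambda>e. e i) = 0"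
    unfolding G using assms
    by (subst integral_distr[OF Tm cm]) (auto simp: Ti stdP_facts Bochner_Integration.integral_sum integrable_mult_right)
  show "integrable (gaussian_vec n S) (\<lambda>e. e i * e j)"
  proof -
    have "integrable (stdP n) (\<lambda>x. \<Sum>a<n. \<Sum>b<n. (S j a * S i b) * (x b * x a))"
    proof (rule Bochner_Integration.integrable_sum, rule Bochner_Integration.integrable_sum)
      fix a b assume "a \<in> {..<n}" "b \<in> {..<n}"
      then show "integrable (stdP n) (\<lambda>x. (S j a * S i b) * (x b * x a))"
        using stdP_prod[of b n a] by simp
    qed
    moreover have "(\<lambda>x. \<Sum>a<n. \<Sum>b<n. (S j a * S i b) * (x b * x a)) = (\<lambda>x. T x i * T x j)"
      using assms by (auto simp: Ti sum_distrib_left sum_distrib_right intro!: sum.cong)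
    ultimately show ?thesis
      unfolding G by (subst integrable_distr_eq[OF Tm borel_measurable_times[OF cm cm]]) (use assms in auto)
  qed
qed

lemma G_prob: "prob_space (gaussian_vec n S)"
  unfolding gaussian_vec_def
  by (intro prob_space.prob_space_distr prob_space_PiM stdN_facts measurable_restrict
      borel_measurable_sum borel_measurable_times borel_measurable_const stdP_comp_meas) auto


lemma risk_quad:
  fixes a :: "nat \<Rightarrow> real" and Q S :: "nat \<Rightarrow> nat \<Rightarrow> real"
  shows "(\<integral>e. (1/real n) * (\<Sum>i<n. \<Sum>j<n. (a i + e i) * Q i j * (a j + e j)) \<partial>gaussian_vec n S)
    = (1/real n) * (\<Sum>i<n. \<Sum>j<n. a i * Q i j * a j)
      + (\<integral>e. (1/real n) * (\<Sum>i<n. \<Sum>j<n. e i * Q i j * e j) \<partial>gaussian_vec n S)"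
proof -
  let ?G = "gaussian_vec n S"
  interpret G: prob_space ?G by (rule G_prob)
  define c where "c = (\<Sum>i<n. \<Sum>j<n. a i * Q i j * a j)"
  define L where "L = (\<lambda>e::nat\<Rightarrow>real. \<Sum>i<n. \<Sum>j<n. (a i * Q i j) * e j + (Q i j * a j) * e i)"
  define R where "R = (\<lambda>e::nat\<Rightarrow>real. \<Sum>i<n. \<Sum>j<n. Q i j * (e i * e j))"
  have pt: "(\<lambda>e. (1/real n) * (\<Sum>i<n. \<Sum>j<n. (a i + e i) * Q i j * (a j + e j)))
      = (\<lambda>e. (1/real n) * c + ((1/real n) * L e + (1/real n) * R e))"
    by (rule ext) (simp add: c_def L_def R_def algebra_simps sum.distrib sum_distrib_left)
  have pt2: "(\<lambda>e. (1/real n) * (\<Sum>i<n. \<Sum>j<n. e i * Q i j * e j)) = (\<lambda>e. (1/real n) * R e)"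
    by (rule ext) (simp add: R_def algebra_simps)
  have iL: "integrable ?G L" unfolding L_def
    by (intro Bochner_Integration.integrable_sum Bochner_Integration.integrable_add integrable_mult_right G_facts) auto
  have iR: "integrable ?G R" unfolding R_def
    by (intro Bochner_Integration.integrable_sum integrable_mult_right G_facts) auto
  have L0: "integral\<^sup>L ?G L = 0" unfolding L_def
    apply (subst Bochner_Integration.integral_sum)
     apply (intro Bochner_Integration.integrable_sum Bochner_Integration.integrable_add integrable_mult_right G_facts; auto)
    apply (rule sum.neutral, clarify)
    apply (subst Bochner_Integration.integral_sum)
     apply (intro Bochner_Integration.integrable_sum Bochner_Integration.integrable_add integrable_mult_right G_facts; auto)
    apply (rule sum.neutral, clarify)
    apply (subst Bochner_Integration.integral_add)
      apply (intro integrable_mult_right G_facts; auto)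
     apply (intro integrable_mult_right G_facts; auto)
    apply (simp add: G_facts)
    done
  show ?thesis
    unfolding pt pt2
    apply (subst Bochner_Integration.integral_add)
      apply simp
     apply (intro Bochner_Integration.integrable_add integrable_mult_right iL iR)
    apply (subst Bochner_Integration.integral_add)
      apply (intro integrable_mult_right iL)
     apply (intro integrable_mult_right iR)
    apply (simp add: L0 c_def G.prob_space)
    done
qed


abbreviation "Xt n \<equiv> product_topology (\<lambda>_::nat. (euclideanreal)) {..<(n::nat)}"

lemma attains_min_gen:
  fixes F g :: "(nat \<Rightarrow> real) \<Rightarrow> real" and C :: "real set"
  assumes cF: "continuous_map (Xt n) euclideanreal F"
    and cg: "continuous_map (Xt n) euclideanreal g"
    and C: "closed C"
    and bnd: "\<And>x i. g x \<in> C \<Longrightarrow> i < n \<Longrightarrow> \<bar>x i\<bar> \<le> R"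
    and rF: "\<And>x. F (restrict x {..<n}) = F x"
    and rg: "\<And>x. g (restrict x {..<n}) = g x"
    and ne: "g xz \<in> C"
  shows "\<exists>u. g u \<in> C \<and> (\<forall>x. g x \<in> C \<longrightarrow> F u \<le> F x)"
proof -
  define K where "K = {x \<in> topspace (Xt n). g x \<in> C} \<inter> PiE {..<n} (\<lambda>_. {-R..R})"
  have "closedin (Xt n) {x \<in> topspace (Xt n). g x \<in> C}"
    by (rule closedin_continuous_map_preimage[OF cg]) (use C in simp)
  moreover have "compactin (Xt n) (PiE {..<n} (\<lambda>_. {-R..R}))"
    by (subst compactin_PiE) auto
  ultimately have cK: "compactin (Xt n) K" unfolding K_def by (rule closed_Int_compactin)
  have rK: "g x \<in> C \<Longrightarrow> restrict x {..<n} \<in> K" for x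
    using bnd[of x] rg[of x] by (force simp: K_def PiE_iff abs_le_iff)
  have "compact (F ` K)" using image_compactin[OF cK cF] by simp
  moreover have "F ` K \<noteq> {}" using rK[OF ne] by auto
  ultimately obtain y where y: "y \<in> F ` K" "\<And>z. z \<in> F ` K \<Longrightarrow> y \<le> z"
    using compact_attains_inf by metis
  then obtain u where u: "u \<in> K" "F u = y" by auto
  show ?thesis
  proof (intro exI conjI allI impI)
    show "g u \<in> C" using u by (auto simp: K_def)
    fix x assume "g x \<in> C"
    then have "F u \<le> F (restrict x {..<n})" using y u rK by auto
    then show "F u \<le> F x" by (simp add: rF)
  qed
qed


definition bf :: "nat \<Rightarrow> (nat \<Rightarrow> nat \<Rightarrow> real) \<Rightarrow> (nat \<Rightarrow> real) \<Rightarrow> (nat \<Rightarrow> real) \<Rightarrow> real" where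
  "bf n B x y = (\<Sum>i<n. \<Sum>j<n. x i * B i j * y j)"
definition ip :: "nat \<Rightarrow> (nat \<Rightarrow> real) \<Rightarrow> (nat \<Rightarrow> real) \<Rightarrow> real" where
  "ip n x y = (\<Sum>i<n. x i * y i)"
definition nsq :: "nat \<Rightarrow> (nat \<Rightarrow> real) \<Rightarrow> real" where
  "nsq n x = (\<Sum>i<n. (x i)^2)"
definition mv :: "nat \<Rightarrow> (nat \<Rightarrow> nat \<Rightarrow> real) \<Rightarrow> (nat \<Rightarrow> real) \<Rightarrow> nat \<Rightarrow> real" where
  "mv n B x = (\<lambda>i. \<Sum>j<n. B i j * x j)"

lemma bf_add: "bf n B (\<lambda>i. x i + t * y i) (\<lambda>i. x i + t * y i)
   = bf n B x x + t * bf n B x y + t * bf n B y x + t^2 * bf n B y y"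
  unfolding bf_def by (simp add: algebra_simps sum.distrib sum_distrib_left power2_eq_square)

lemma bf_sub: "bf n B (\<lambda>i. x i - y i) (\<lambda>i. x i - y i)
   = bf n B x x - bf n B x y - bf n B y x + bf n B y y"
  unfolding bf_def by (simp add: algebra_simps sum.distrib sum_distrib_left sum_subtractf)

lemma bf_scale: "bf n B (\<lambda>i. c * x i) (\<lambda>i. c * x i) = c^2 * bf n B x x"
  unfolding bf_def by (simp add: algebra_simps sum_distrib_left power2_eq_square)

lemma nsq_add: "nsq n (\<lambda>i. x i + t * y i) = nsq n x + 2 * t * ip n x y + t^2 * nsq n y"
  unfolding nsq_def ip_def by (simp add: algebra_simps sum.distrib sum_distrib_left power2_eq_square)

lemma nsq_scale: "nsq n (\<lambda>i. c * x i) = c^2 * nsq n x"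
  unfolding nsq_def by (simp add: algebra_simps sum_distrib_left power2_eq_square)

lemma nsq_nonneg: "0 \<le> nsq n x" unfolding nsq_def by (simp add: sum_nonneg)

lemma nsq_zero: "nsq n x = 0 \<Longrightarrow> i < n \<Longrightarrow> x i = 0"
  unfolding nsq_def by (subst (asm) sum_nonneg_eq_0_iff) auto

lemma bf_zero: "nsq n x = 0 \<Longrightarrow> bf n B x y = 0"
  unfolding bf_def using nsq_zero[of n x] by simp

lemma bf_sym: "\<forall>i<n. \<forall>j<n. B i j = B j i \<Longrightarrow> bf n B y x = bf n B x y"
  unfolding bf_def by (subst sum.swap) (auto intro!: sum.cong)

lemma bf_mv: assumes sym: "\<forall>i<n. \<forall>j<n. B i j = B j i" shows "bf n B u w = ip n (mv n B u) w"
proof -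
  have "bf n B u w = (\<Sum>j<n. \<Sum>i<n. u i * B i j * w j)" unfolding bf_def by (rule sum.swap)
  also have "\<dots> = (\<Sum>j<n. (\<Sum>i<n. B j i * u i) * w j)"
    unfolding sum_distrib_right
  proof (intro sum.cong refl)
    fix i j assume "j \<in> {..<n}" "i \<in> {..<n}"
    then show "u i * B i j * w j = B j i * u i * w j" using sym by simp
  qed
  finally show ?thesis unfolding ip_def mv_def .
qed

lemma ip_self: "ip n x x = nsq n x" unfolding ip_def nsq_def by (simp add: power2_eq_square)

lemma quad_zero:
  fixes sv kk :: real
  assumes "\<forall>tv. 0 \<le> 2 * tv * sv + tv^2*kk" "0 \<le> sv" shows "sv = 0"
proof (rule ccontr)
  assume "sv \<noteq> 0" then have sp: "sv > 0" using assms by simp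
  define d where "d = \<bar>kk\<bar> + 1"
  have dp: "d > 0" unfolding d_def by simp
  have "0 \<le> 2*(-sv/d)* sv + (-sv/d)^2*kk" using assms by blast
  then have "0 \<le> d^2 * (2*(-sv/d)* sv + (-sv/d)^2*kk)" using dp by simp
  also have "\<dots> = sv^2 * (kk - 2 * d)" using dp by (simp add: field_simps power2_eq_square)
  finally have "0 \<le> sv^2 * (kk - 2*d)" .
  moreover have "kk - 2*d < 0" unfolding d_def by (cases "kk \<ge> 0") auto
  moreover have "sv^2 > 0" using sp by simp
  ultimately show False using mult_pos_neg[of "sv^2" "kk - 2*d"] by linarith
qed

lemma cont_bf: "continuous_map (Xt n) euclideanreal (\<lambda>x. bf n B x x)"
  unfolding bf_def
  by (intro continuous_map_sum continuous_map_real_mult continuous_map_const[THEN iffD2]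
        continuous_map_product_projection) auto

lemma cont_nsq: "continuous_map (Xt n) euclideanreal (nsq n)"
proof -
  have "continuous_map (Xt n) euclideanreal (\<lambda>x. \<Sum>i<n. x i * x i)"
    by (intro continuous_map_sum continuous_map_real_mult continuous_map_product_projection) auto
  then show ?thesis unfolding nsq_def by (simp add: power2_eq_square)
qed

lemma rayleigh_min:
  assumes n: "0 < n" and sym: "\<forall>i<n. \<forall>j<n. B i j = B j i"
  shows "\<exists>\<mu>. mat_eigenvalue n B \<mu> \<and> (\<forall>x. \<mu> * nsq n x \<le> bf n B x x)"
proof -
  define x0 where "x0 = (\<lambda>i::nat. if i = 0 then (1::real) else 0)"
  have "nsq n x0 = (\<Sum>i<n. if i = 0 then 1 else 0)" unfolding nsq_def x0_def
    by (intro sum.cong) auto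
  also have "\<dots> = 1" using n by (simp add: sum.delta)
  finally have x0: "nsq n x0 \<in> {1}" by simp
  have bnd: "\<bar>x i\<bar> \<le> 1" if "nsq n x \<in> {1}" "i < n" for x i
  proof -
    have "(x i)^2 \<le> nsq n x" unfolding nsq_def
      by (rule member_le_sum[where f="\<lambda>i. (x i)^2"]) (use that in auto)
    then have "(x i)^2 \<le> 1^2" using that by simp
    then show ?thesis using abs_le_square_iff by (metis abs_one)
  qed
  have rF: "bf n B (restrict x {..<n}) (restrict x {..<n}) = bf n B x x" for x
    unfolding bf_def by (intro sum.cong) auto
  have rg: "nsq n (restrict x {..<n}) = nsq n x" for x
    unfolding nsq_def by (intro sum.cong) auto
  obtain u where u1: "nsq n u = 1" and umin: "\<And>x. nsq n x = 1 \<Longrightarrow> bf n B u u \<le> bf n B x x"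
  proof -
    have "\<exists>u. nsq n u \<in> {1} \<and> (\<forall>x. nsq n x \<in> {1} \<longrightarrow> bf n B u u \<le> bf n B x x)"
      by (rule attains_min_gen[where F="\<lambda>x. bf n B x x" and g="nsq n" and n=n and C="{1}" and R=1 and xz=x0])
         (use cont_bf cont_nsq bnd rF rg x0 in auto)
    then show ?thesis using that by auto
  qed
  define m where "m = bf n B u u"
  have hom: "m * nsq n x \<le> bf n B x x" for x
  proof (cases "nsq n x = 0")
    case True then show ?thesis using bf_zero by simp
  next
    case False
    then have pos: "nsq n x > 0" using nsq_nonneg[of n x] by simp
    define c where "c = 1 / sqrt (nsq n x)"
    have c2: "c^2 = 1 / nsq n x" unfolding c_def using pos by (simp add: power_divide)
    have "nsq n (\<lambda>i. c * x i) = 1" using pos by (simp add: nsq_scale c2)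
    then have "m \<le> c^2 * bf n B x x" using umin[of "\<lambda>i. c * x i"] by (simp add: bf_scale m_def)
    then have "m * nsq n x \<le> c^2 * bf n B x x * nsq n x" using pos by simp
    also have "\<dots> = bf n B x x" using pos by (simp add: c2)
    finally show ?thesis .
  qed
  define w where "w = (\<lambda>i. mv n B u i - m * u i)"
  have "\<forall>t. 0 \<le> 2*t*nsq n w + t^2*(bf n B w w - m * nsq n w)"
  proof
    fix t :: real
    have "m * nsq n (\<lambda>i. u i + t * w i) \<le> bf n B (\<lambda>i. u i + t * w i) (\<lambda>i. u i + t * w i)"
      by (rule hom)
    then have "m * (1 + 2 * t * ip n u w + t^2 * nsq n w)
        \<le> m + 2 * t * bf n B u w + t^2 * bf n B w w"
      by (simp add: nsq_add bf_add u1 bf_sym[OF sym, of w u] m_def algebra_simps)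
    moreover have "bf n B u w = ip n (mv n B u) w" by (rule bf_mv[OF sym])
    moreover have "ip n (mv n B u) w - m * ip n u w = nsq n w"
      unfolding w_def ip_def nsq_def by (simp add: algebra_simps sum_subtractf sum_distrib_left power2_eq_square sum.distrib)
    ultimately show "0 \<le> 2*t*nsq n w + t^2*(bf n B w w - m * nsq n w)"
      by (simp add: algebra_simps)
  qed
  then have "nsq n w = 0" using quad_zero nsq_nonneg by blast
  then have eig: "\<forall>i<n. mv n B u i = m * u i" using nsq_zero unfolding w_def by fastforce
  have "\<exists>i<n. u i \<noteq> 0"
  proof (rule ccontr)
    assume "\<not> (\<exists>i<n. u i \<noteq> 0)" then have "nsq n u = 0" unfolding nsq_def by simp
    then show False using u1 by simp
  qed
  then have "mat_eigenvalue n B m" using eig unfolding mat_eigenvalue_def mv_def by blast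
  then show ?thesis using hom by blast
qed

lemma rayleigh_max:
  assumes n: "0 < n" and sym: "\<forall>i<n. \<forall>j<n. B i j = B j i"
  shows "\<exists>\<mu>. mat_eigenvalue n B \<mu> \<and> (\<forall>x. bf n B x x \<le> \<mu> * nsq n x)"
proof -
  obtain \<mu> where e: "mat_eigenvalue n (\<lambda>i j. - B i j) \<mu>" and h: "\<forall>x. \<mu> * nsq n x \<le> bf n (\<lambda>i j. - B i j) x x"
    using rayleigh_min[OF n, of "\<lambda>i j. - B i j"] sym by auto
  have "mat_eigenvalue n B (-\<mu>)"
  proof -
    obtain v where "\<exists>i<n. v i \<noteq> 0" "\<forall>i<n. (\<Sum>j<n. - B i j * v j) = \<mu> * v i"
      using e unfolding mat_eigenvalue_def by blast
    then show ?thesis unfolding mat_eigenvalue_def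
      by (intro exI[of _ v]) (auto simp: sum_negf)
  qed
  moreover have "bf n B x x \<le> (-\<mu>) * nsq n x" for x
    using h[rule_format, of x] unfolding bf_def by (simp add: sum_negf)
  ultimately show ?thesis by blast
qed



lemma bf_cong: "(\<And>i. i < n \<Longrightarrow> x i = y i) \<Longrightarrow> bf n B x x = bf n B y y"
  unfolding bf_def by (intro sum.cong) auto

lemma nsq_cong: "(\<And>i. i < n \<Longrightarrow> x i = y i) \<Longrightarrow> nsq n x = nsq n y"
  unfolding nsq_def by (intro sum.cong) auto

lemma ip_amgm:
  assumes "c > 0" shows "2 * ip n x y \<le> c * nsq n x + nsq n y / c"
proof -
  have "0 \<le> nsq n (\<lambda>i. x i + (-1/c) * y i)" by (rule nsq_nonneg)
  also have "\<dots> = nsq n x + 2 * (-1/c) * ip n x y + (-1/c)^2 * nsq n y"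
    by (rule nsq_add)
  also have "\<dots> = nsq n x - 2 / c * ip n x y + nsq n y / c^2"
    by (simp add: power2_eq_square)
  finally have "0 \<le> c * (nsq n x - 2 / c * ip n x y + nsq n y / c^2)" using assms by simp
  also have "\<dots> = c * nsq n x - 2 * ip n x y + nsq n y / c"
    using assms by (simp add: field_simps power2_eq_square)
  finally show ?thesis by simp
qed

lemma bf_amgm:
  assumes psd: "\<forall>z. 0 \<le> bf n B z z" and sym: "\<forall>i<n. \<forall>j<n. B i j = B j i" and "c > 0"
  shows "2 * bf n B x y \<le> c * bf n B x x + bf n B y y / c"
proof -
  have "0 \<le> bf n B (\<lambda>i. x i + (-1/c) * y i) (\<lambda>i. x i + (-1/c) * y i)" using psd by blast
  also have "\<dots> = bf n B x x + (-1/c) * bf n B x y + (-1/c) * bf n B y x + (-1/c)^2 * bf n B y y"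
    by (rule bf_add)
  also have "\<dots> = bf n B x x - 2 / c * bf n B x y + bf n B y y / c^2"
    by (simp add: bf_sym[OF sym, of y x] power2_eq_square)
  finally have "0 \<le> c * (bf n B x x - 2 / c * bf n B x y + bf n B y y / c^2)" using assms by simp
  also have "\<dots> = c * bf n B x x - 2 * bf n B x y + bf n B y y / c"
    using assms by (simp add: field_simps power2_eq_square)
  finally show ?thesis by simp
qed

lemma eig_lower:
  assumes n: "0 < n" and sym: "\<forall>i<n. \<forall>j<n. B i j = B j i"
    and e: "\<forall>lam. mat_eigenvalue n B lam \<longrightarrow> c \<le> lam"
  shows "c * nsq n x \<le> bf n B x x"
proof -
  obtain \<mu> where "mat_eigenvalue n B \<mu>" "\<forall>x. \<mu> * nsq n x \<le> bf n B x x"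
    using rayleigh_min[OF n sym] by blast
  then show ?thesis using e nsq_nonneg[of n x] by (meson mult_right_mono order_trans)
qed

lemma eig_upper:
  assumes n: "0 < n" and sym: "\<forall>i<n. \<forall>j<n. B i j = B j i"
    and e: "\<forall>lam. mat_eigenvalue n B lam \<longrightarrow> lam \<le> c"
  shows "bf n B x x \<le> c * nsq n x"
proof -
  obtain \<mu> where "mat_eigenvalue n B \<mu>" "\<forall>x. bf n B x x \<le> \<mu> * nsq n x"
    using rayleigh_max[OF n sym] by blast
  then show ?thesis using e nsq_nonneg[of n x] by (meson mult_right_mono order_trans)
qed

lemma pd_surj:
  assumes n: "0 < n" and sym: "\<forall>i<n. \<forall>j<n. B i j = B j i"
    and lo: "\<forall>z. p * nsq n z \<le> bf n B z z" and p: "p > 0"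
  shows "\<exists>x. \<forall>i<n. mv n B x i = v i"
proof -
  define F where "F = (\<lambda>x. bf n B x x - 2 * ip n v x)"
  define Rs where "Rs = 4 * nsq n v / p^2 + 1"
  have Rs: "Rs > 0" unfolding Rs_def using nsq_nonneg[of n v] p by (simp add: add_nonneg_pos)
  have Fpos: "F x > 0" if "nsq n x > Rs" for x
  proof -
    have "2 * ip n v x \<le> (2/p) * nsq n v + nsq n x * p / 2"
      using ip_amgm[of "2/p" n v x] p by simp
    moreover have "p * nsq n x \<le> bf n B x x" using lo by blast
    ultimately have "F x \<ge> p * nsq n x - ((2/p) * nsq n v + nsq n x * p / 2)"
      unfolding F_def by linarith
    moreover have "p * nsq n x - ((2/p) * nsq n v + nsq n x * p / 2) = p/2 * (nsq n x - 4 * nsq n v / p^2)"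
      using p by (simp add: field_simps power2_eq_square)
    moreover have "nsq n x - 4 * nsq n v / p^2 > 0" using that unfolding Rs_def by simp
    ultimately show ?thesis using p by (smt (verit) mult_pos_pos half_gt_zero)
  qed
  have bnd: "\<bar>x i\<bar> \<le> Rs + 1" if "nsq n x \<in> {..Rs}" "i < n" for x i
  proof -
    have "(x i)^2 \<le> nsq n x" unfolding nsq_def
      by (rule member_le_sum[where f="\<lambda>i. (x i)^2"]) (use that in auto)
    then have xi: "(x i)^2 \<le> Rs" using that by simp
    show ?thesis
    proof (cases "\<bar>x i\<bar> \<le> 1")
      case True then show ?thesis using Rs by simp
    next
      case False
      then have "\<bar>x i\<bar> * 1 \<le> \<bar>x i\<bar> * \<bar>x i\<bar>"
        by (intro mult_left_mono) auto
      then have "\<bar>x i\<bar> \<le> \<bar>x i\<bar> * \<bar>x i\<bar>" by simp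
      also have "\<dots> = (x i)^2" by (simp add: power2_eq_square abs_mult_self_eq)
      finally show ?thesis using xi by simp
    qed
  qed
  have rF: "F (restrict x {..<n}) = F x" for x
    unfolding F_def bf_def ip_def by (intro arg_cong2[where f="(-)"] arg_cong2[where f="(*)"] refl sum.cong) auto
  have rg: "nsq n (restrict x {..<n}) = nsq n x" for x
    unfolding nsq_def by (intro sum.cong) auto
  have cF: "continuous_map (Xt n) euclideanreal F"
  proof -
    have "continuous_map (Xt n) euclideanreal (\<lambda>x. bf n B x x - 2 * (\<Sum>i<n. v i * x i))"
      by (intro continuous_map_diff cont_bf continuous_map_real_mult continuous_map_const[THEN iffD2]
          continuous_map_sum continuous_map_product_projection) auto
    then show ?thesis unfolding F_def ip_def .
  qed
  have z0: "nsq n (\<lambda>_. 0) \<in> {..Rs}" using Rs by (simp add: nsq_def)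
  have "\<exists>u. nsq n u \<in> {..Rs} \<and> (\<forall>x. nsq n x \<in> {..Rs} \<longrightarrow> F u \<le> F x)"
    by (rule attains_min_gen[where F=F and g="nsq n" and n=n and C="{..Rs}" and R="Rs+1" and xz="\<lambda>_. 0"])
       (use cF cont_nsq bnd rF rg z0 in auto)
  then obtain u where umin: "\<And>x. nsq n x \<le> Rs \<Longrightarrow> F u \<le> F x" by auto
  have F0: "F (\<lambda>_. 0) = 0" unfolding F_def bf_def ip_def by simp
  have glob: "F u \<le> F x" for x
  proof (cases "nsq n x \<le> Rs")
    case True then show ?thesis by (rule umin)
  next
    case False
    then have "F x > 0" using Fpos by simp
    moreover have "F u \<le> 0" using umin[of "\<lambda>_. 0"] z0 F0 by simp
    ultimately show ?thesis by simp
  qed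
  define w where "w = (\<lambda>i. mv n B u i - v i)"
  have "\<forall>t. 0 \<le> 2 * t * nsq n w + t^2 * bf n B w w"
  proof
    fix t :: real
    have "F u \<le> F (\<lambda>i. u i + t * w i)" by (rule glob)
    moreover have "ip n v (\<lambda>i. u i + t * w i) = ip n v u + t * ip n v w"
      unfolding ip_def by (simp add: algebra_simps sum.distrib sum_distrib_left)
    moreover have "bf n B u w = ip n (mv n B u) w" by (rule bf_mv[OF sym])
    moreover have "ip n (mv n B u) w - ip n v w = nsq n w"
      unfolding w_def ip_def nsq_def by (simp add: algebra_simps sum_subtractf power2_eq_square sum.distrib sum_distrib_left)
    ultimately show "0 \<le> 2 * t * nsq n w + t^2 * bf n B w w"
      unfolding F_def by (simp add: bf_add bf_sym[OF sym, of w u] algebra_simps)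
  qed
  then have "nsq n w = 0" using quad_zero nsq_nonneg by blast
  then have "\<forall>i<n. mv n B u i = v i" using nsq_zero unfolding w_def by fastforce
  then show ?thesis by blast
qed



lemma sandwich_bf:
  "bf n (mat_sandwich n S Q) w w = bf n Q (mv n S w) (mv n S w)"
proof -
  have "bf n (mat_sandwich n S Q) w w
     = (\<Sum>i<n. \<Sum>j<n. \<Sum>k<n. \<Sum>l<n. w i * S k i * Q k l * S l j * w j)"
    unfolding bf_def mat_sandwich_def sum_distrib_left unfolding sum_distrib_right
    by (simp add: mult_ac)
  also have "\<dots> = (\<Sum>i<n. \<Sum>k<n. \<Sum>j<n. \<Sum>l<n. w i * S k i * Q k l * S l j * w j)"
    by (rule sum.cong[OF refl], rule sum.swap)
  also have "\<dots> = (\<Sum>k<n. \<Sum>i<n. \<Sum>j<n. \<Sum>l<n. w i * S k i * Q k l * S l j * w j)"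
    by (rule sum.swap)
  also have "\<dots> = (\<Sum>k<n. \<Sum>i<n. \<Sum>l<n. \<Sum>j<n. w i * S k i * Q k l * S l j * w j)"
    by (rule sum.cong[OF refl], rule sum.cong[OF refl], rule sum.swap)
  also have "\<dots> = (\<Sum>k<n. \<Sum>l<n. \<Sum>i<n. \<Sum>j<n. w i * S k i * Q k l * S l j * w j)"
    by (rule sum.cong[OF refl], rule sum.swap)
  also have "\<dots> = bf n Q (mv n S w) (mv n S w)"
    unfolding bf_def mv_def sum_distrib_right unfolding sum_distrib_left
    by (simp add: mult_ac)
  finally show ?thesis .
qed

lemma sigma_bf:
  assumes sq: "\<forall>i<n. \<forall>j<n. Sg i j = (\<Sum>k<n. S i k * S j k)"
  shows "bf n Sg x x = nsq n (\<lambda>k. \<Sum>j<n. S j k * x j)"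
proof -
  have "bf n Sg x x = (\<Sum>i<n. \<Sum>j<n. x i * (\<Sum>k<n. S i k * S j k) * x j)"
    unfolding bf_def using sq by (intro sum.cong refl) auto
  also have "\<dots> = (\<Sum>i<n. \<Sum>j<n. \<Sum>k<n. x i * S i k * S j k * x j)"
    unfolding sum_distrib_left unfolding sum_distrib_right by (simp add: mult_ac)
  also have "\<dots> = (\<Sum>i<n. \<Sum>k<n. \<Sum>j<n. x i * S i k * S j k * x j)"
    by (rule sum.cong[OF refl], rule sum.swap)
  also have "\<dots> = (\<Sum>k<n. \<Sum>i<n. \<Sum>j<n. x i * S i k * S j k * x j)"
    by (rule sum.swap)
  also have "\<dots> = nsq n (\<lambda>k. \<Sum>j<n. S j k * x j)"
    unfolding nsq_def power2_eq_square sum_distrib_right unfolding sum_distrib_left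
    by (simp add: mult_ac)
  finally show ?thesis .
qed

lemma sigma_mv:
  assumes sq: "\<forall>i<n. \<forall>j<n. Sg i j = (\<Sum>k<n. S i k * S j k)" and i: "i < n"
  shows "mv n S (\<lambda>k. \<Sum>j<n. S j k * x j) i = mv n Sg x i"
proof -
  have "mv n S (\<lambda>k. \<Sum>j<n. S j k * x j) i = (\<Sum>k<n. \<Sum>j<n. S i k * S j k * x j)"
    unfolding mv_def by (simp add: sum_distrib_left mult_ac)
  also have "\<dots> = (\<Sum>j<n. \<Sum>k<n. S i k * S j k * x j)" by (rule sum.swap)
  also have "\<dots> = mv n Sg x i"
    unfolding mv_def using sq i by (simp add: sum_distrib_right)
  finally show ?thesis .
qed

lemma Q_bounds:
  fixes Sg S Q :: "nat \<Rightarrow> nat \<Rightarrow> real"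
  assumes n_pos: "0 < n"
    and Psi: "0 < \<Psi>low" "\<Psi>low \<le> \<Psi>high"
    and sqrt_Sigma: "\<forall>i<n. \<forall>j<n. Sg i j = (\<Sum>k<n. S i k * S j k)"
    and Sigma_eig: "\<forall>lam. mat_eigenvalue n Sg lam \<longrightarrow> \<Psi>low \<le> lam \<and> lam \<le> \<Psi>high"
    and Q_pd: "mat_pos_def n Q" and Lam: "0 < \<Lambda>low" "0 \<le> \<Lambda>high"
    and Q_eig: "\<forall>lam. mat_eigenvalue n (mat_sandwich n S Q) lam \<longrightarrow> \<Lambda>low < lam \<and> lam < \<Lambda>high"
  shows "\<Lambda>low / \<Psi>high * nsq n v \<le> bf n Q v v \<and> bf n Q v v \<le> \<Lambda>high / \<Psi>low * nsq n v"
proof -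
  have symS: "\<forall>i<n. \<forall>j<n. Sg i j = Sg j i" using sqrt_Sigma by (simp add: mult.commute)
  have symQ: "\<forall>i<n. \<forall>j<n. Q i j = Q j i" using Q_pd unfolding mat_pos_def_def mat_symmetric_def by blast
  define A where "A = mat_sandwich n S Q"
  have symA: "\<forall>i<n. \<forall>j<n. A i j = A j i"
  proof (intro allI impI)
    fix i j assume ij: "i < n" "j < n"
    have "A i j = (\<Sum>k<n. \<Sum>l<n. S k i * Q k l * S l j)" unfolding A_def mat_sandwich_def by simp
    also have "\<dots> = (\<Sum>l<n. \<Sum>k<n. S k i * Q k l * S l j)" by (rule sum.swap)
    also have "\<dots> = A j i" unfolding A_def mat_sandwich_def
      using symQ by (intro sum.cong refl) (simp add: mult_ac)
    finally show "A i j = A j i" .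
  qed
  have Slo: "\<Psi>low * nsq n z \<le> bf n Sg z z" for z
    by (rule eig_lower[OF n_pos symS]) (use Sigma_eig in blast)
  have Shi: "bf n Sg z z \<le> \<Psi>high * nsq n z" for z
    by (rule eig_upper[OF n_pos symS]) (use Sigma_eig in blast)
  have Alo: "\<Lambda>low * nsq n z \<le> bf n A z z" for z
    by (rule eig_lower[OF n_pos symA]) (use Q_eig in \<open>auto simp: A_def less_imp_le\<close>)
  have Ahi: "bf n A z z \<le> \<Lambda>high * nsq n z" for z
    by (rule eig_upper[OF n_pos symA]) (use Q_eig in \<open>auto simp: A_def less_imp_le\<close>)
  obtain x where x: "\<forall>i<n. mv n Sg x i = v i"
    using pd_surj[OF n_pos symS, of "\<Psi>low" v] Slo Psi by blast
  define w where "w = (\<lambda>k. \<Sum>j<n. S j k * x j)"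
  define a where "a = bf n Sg x x"
  define y where "y = mv n Sg x"
  have a_w: "a = nsq n w" unfolding a_def w_def by (rule sigma_bf[OF sqrt_Sigma])
  have Sw: "\<forall>i<n. mv n S w i = v i" using sigma_mv[OF sqrt_Sigma] x unfolding w_def by simp
  have nv: "nsq n v = nsq n y" unfolding y_def using x by (intro nsq_cong) simp
  have Qv: "bf n Q v v = bf n A w w"
    unfolding A_def sandwich_bf using Sw by (intro bf_cong) simp
  have psd: "\<forall>z. 0 \<le> bf n Sg z z" using Slo nsq_nonneg Psi by (meson mult_nonneg_nonneg order_trans less_imp_le)
  have lo: "\<Psi>low * a \<le> nsq n y"
  proof -
    have "a = ip n y x" unfolding a_def y_def by (rule bf_mv[OF symS])
    moreover have "2 * ip n y x \<le> (1/\<Psi>low) * nsq n y + nsq n x / (1/\<Psi>low)"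
      using ip_amgm[of "1/\<Psi>low" n y x] Psi by simp
    moreover have "\<Psi>low * nsq n x \<le> a" unfolding a_def by (rule Slo)
    moreover have "nsq n x / (1 / \<Psi>low) = \<Psi>low * nsq n x" using Psi by simp
    ultimately have "2 * a \<le> 1 / \<Psi>low * nsq n y + a" by linarith
    then have "a \<le> 1 / \<Psi>low * nsq n y" by linarith
    then have "a \<le> nsq n y / \<Psi>low" by simp
    then show ?thesis using Psi by (simp add: field_simps)
  qed
  have hi: "nsq n y \<le> \<Psi>high * a"
  proof -
    have "bf n Sg x y = ip n y y" unfolding y_def by (rule bf_mv[OF symS])
    then have e: "bf n Sg x y = nsq n y" by (simp add: ip_self)
    have "2 * bf n Sg x y \<le> \<Psi>high * bf n Sg x x + bf n Sg y y / \<Psi>high"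
      using bf_amgm[OF psd symS, of "\<Psi>high" x y] Psi by simp
    moreover have "bf n Sg y y / \<Psi>high \<le> nsq n y"
      using Shi[of y] Psi by (simp add: pos_divide_le_eq mult.commute)
    ultimately have "2 * nsq n y \<le> \<Psi>high * a + nsq n y" using Psi e unfolding a_def by simp
    then show ?thesis by simp
  qed
  have a0: "0 \<le> a" using a_w nsq_nonneg by simp
  have "nsq n v / \<Psi>high \<le> a" using hi nv Psi by (simp add: pos_divide_le_eq mult.commute)
  then have "\<Lambda>low * (nsq n v / \<Psi>high) \<le> \<Lambda>low * a" using Lam by (intro mult_left_mono) auto
  moreover have "\<Lambda>low * a \<le> bf n Q v v" using Alo[of w] Qv a_w by simp
  ultimately have L: "\<Lambda>low / \<Psi>high * nsq n v \<le> bf n Q v v" by simp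
  have "a \<le> nsq n v / \<Psi>low" using lo nv Psi by (simp add: pos_le_divide_eq mult.commute)
  then have "\<Lambda>high * a \<le> \<Lambda>high * (nsq n v / \<Psi>low)" using Lam by (intro mult_left_mono) auto
  moreover have "bf n Q v v \<le> \<Lambda>high * a" using Ahi[of w] Qv a_w by simp
  ultimately have U: "bf n Q v v \<le> \<Lambda>high / \<Psi>low * nsq n v" by simp
  show ?thesis using L U by simp
qed



lemma final_arith:
  fixes Pl Ph Ll Lh d H eg Gq bh bg :: real
  assumes P: "0 < Pl" "Pl \<le> Ph" and L: "0 < Ll" "Ll \<le> 1" "1 \<le> Lh" and d: "0 < d"
    and H: "d^2 / 4 < H" and eg: "0 \<le> eg" "Gq = eg^2"
    and dl: "d \<ge> 6 * (Ph * Lh) / (Pl * Ll) * eg"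
    and bh: "Ll / Ph * H \<le> bh" and bg: "bg \<le> Lh / Pl * Gq"
  shows "Ll / (12 * Ph) * d^2 \<le> 2/3 * bh - 3 * bg"
proof -
  define r where "r = Pl * Ll / (6 * Ph * Lh)"
  have Ph: "0 < Ph" using P by simp
  have Lh: "0 < Lh" using L by simp
  have r0: "0 < r" unfolding r_def using P Ph L Lh by simp
  have "Pl * Ll \<le> Ph * Lh" using P L by (intro mult_mono) auto
  then have r6: "r \<le> 1/6" unfolding r_def using Ph Lh by (simp add: field_simps)
  have "6 * (Ph * Lh) / (Pl * Ll) * eg = eg / r" unfolding r_def using P L by (simp add: field_simps)
  then have "eg \<le> d * r" using dl r0 by (simp add: divide_le_eq mult.commute)
  then have "eg^2 \<le> (d * r)^2" using eg by (intro power_mono) auto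
  then have G: "Gq \<le> d^2 * r^2" using eg by (simp add: power_mult_distrib)
  have "3 * bg \<le> 3 * (Lh / Pl * (d^2 * r^2))"
    using bg G P Lh by (smt (verit) mult_left_mono divide_nonneg_pos)
  also have "\<dots> = d^2 * Ll * r / (2 * Ph)"
    unfolding r_def using P Ph L Lh by (simp add: field_simps power2_eq_square)
  also have "\<dots> \<le> d^2 * Ll * (1/6) / (2 * Ph)"
    using r6 Ph L by (intro divide_right_mono mult_left_mono) auto
  finally have g3: "3 * bg \<le> Ll / (12 * Ph) * d^2" by (simp add: field_simps)
  have "Ll / Ph * (d^2 / 4) \<le> Ll / Ph * H" using H L Ph by (intro mult_left_mono) auto
  then have "Ll / Ph * (d^2 / 4) \<le> bh" using bh by linarith
  then have h3: "Ll / (6 * Ph) * d^2 \<le> 2/3 * bh" by (simp add: field_simps)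
  have "Ll / (6 * Ph) * d^2 = 2 * (Ll / (12 * Ph) * d^2)" by (simp add: field_simps)
  then show ?thesis using g3 h3 by linarith
qed

lemma risk_eq:
  fixes Q S :: "nat \<Rightarrow> nat \<Rightarrow> real"
  shows "risk n X f0 S Q f = (1 / real n) * bf n Q (\<lambda>i. f0 (X i) - f (X i)) (\<lambda>i. f0 (X i) - f (X i))
     + (\<integral>e. (1/real n) * (\<Sum>i<n. \<Sum>j<n. e i * Q i j * e j) \<partial>gaussian_vec n S)"
proof -
  have eq: "(\<lambda>e. (1 / real n) * (\<Sum>i<n. \<Sum>j<n. (f0 (X i) + e i - f (X i)) * Q i j * (f0 (X j) + e j - f (X j))))
    = (\<lambda>e. (1 / real n) * (\<Sum>i<n. \<Sum>j<n. ((f0 (X i) - f (X i)) + e i) * Q i j * ((f0 (X j) - f (X j)) + e j)))"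
    by (simp add: algebra_simps)
  show ?thesis unfolding risk_def eq risk_quad bf_def ..
qed

theorem lemmaS8:
  fixes n :: nat and X :: "nat \<Rightarrow> real^'d" and K :: "(real^'d) set"
    and f0 :: "real^'d \<Rightarrow> real"
    and Sigma S Q :: "nat \<Rightarrow> nat \<Rightarrow> real"
    and \<Psi>low \<Psi>high \<Lambda>low \<Lambda>high :: real
    and \<sigma> :: "real \<Rightarrow> real" and r :: nat and V M :: real
    and pif0 :: "real^'d \<Rightarrow> real" and \<delta> :: real
  assumes n_pos: "0 < n"
    and K: "compact K" and X_in: "\<forall>i<n. X i \<in> K"
    and f0_cont: "continuous_on K f0"
    and Psi: "0 < \<Psi>low" "\<Psi>low \<le> \<Psi>high"
    and Lambda: "0 < \<Lambda>low" "\<Lambda>low \<le> 1" "1 \<le> \<Lambda>high"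
    and sqrt_Sigma: "\<forall>i<n. \<forall>j<n. Sigma i j = (\<Sum>k<n. S i k * S j k)"
    and Sigma_eig: "\<forall>lam. mat_eigenvalue n Sigma lam \<longrightarrow> \<Psi>low \<le> lam \<and> lam \<le> \<Psi>high"
    and Q_pd: "mat_pos_def n Q"
    and Q_eig: "\<forall>lam. mat_eigenvalue n (mat_sandwich n S Q) lam \<longrightarrow> \<Lambda>low < lam \<and> lam < \<Lambda>high"
    and \<sigma>_bounded: "bounded (range \<sigma>)"
    and \<sigma>_lipschitz: "\<exists>C. C-lipschitz_on UNIV \<sigma>"
    and proj_mem: "pif0 \<in> nn_class \<sigma> r V M"
    and proj_min: "\<forall>f\<in>nn_class \<sigma> r V M. emp_norm n X (\<lambda>x. f0 x - pif0 x) \<le> emp_norm n X (\<lambda>x. f0 x - f x)"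
    and delta: "\<delta> \<ge> 6 * (\<Psi>high * \<Lambda>high) / (\<Psi>low * \<Lambda>low) * emp_norm n X (\<lambda>x. f0 x - pif0 x)"
  shows "(INF f\<in>{f. \<delta> / 2 < emp_norm n X (\<lambda>x. f x - pif0 x) \<and> emp_norm n X (\<lambda>x. f x - pif0 x) < \<delta>}.
            ereal (risk n X f0 S Q f)) - ereal (risk n X f0 S Q pif0)
         \<ge> ereal (\<Lambda>low / (12 * \<Psi>high) * \<delta>\<^sup>2)"
  proof -
  let ?S = "{f. \<delta> / 2 < emp_norm n X (\<lambda>x. f x - pif0 x) \<and> emp_norm n X (\<lambda>x. f x - pif0 x) < \<delta>}"
  define c where "c = \<Lambda>low / (12 * \<Psi>high) * \<delta>\<^sup>2"
  define rp where "rp = risk n X f0 S Q pif0"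
  have symQ: "\<forall>i<n. \<forall>j<n. Q i j = Q j i" using Q_pd unfolding mat_pos_def_def mat_symmetric_def by blast
  have QB: "\<Lambda>low / \<Psi>high * nsq n v \<le> bf n Q v v \<and> bf n Q v v \<le> \<Lambda>high / \<Psi>low * nsq n v" for v
    by (rule Q_bounds[OF n_pos Psi sqrt_Sigma Sigma_eig Q_pd _ _ Q_eig]) (use Lambda in auto)
  have en: "emp_norm n X (\<lambda>x. p x - q x) = sqrt (nsq n (\<lambda>i. p (X i) - q (X i)) / real n)" for p q :: "real^'d \<Rightarrow> real"
    unfolding emp_norm_def nsq_def by simp
  have key: "ereal (rp + c) \<le> ereal (risk n X f0 S Q f)" if f: "f \<in> ?S" for f
  proof -
    define h where "h = (\<lambda>i. f (X i) - pif0 (X i))"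
    define g where "g = (\<lambda>i. f0 (X i) - pif0 (X i))"
    have fg: "(\<lambda>i. f0 (X i) - f (X i)) = (\<lambda>i. g i - h i)" unfolding g_def h_def by auto
    have diff: "risk n X f0 S Q f - rp = (1 / real n) * (bf n Q h h - 2 * bf n Q g h)"
      unfolding rp_def risk_eq fg g_def[symmetric]
      by (simp add: bf_sub bf_sym[OF symQ, of h g] algebra_simps)
    have nn: "0 \<le> bf n Q (\<lambda>i. h i + (-3) * g i) (\<lambda>i. h i + (-3) * g i)"
      using QB[of "\<lambda>i. h i + (-3) * g i"] nsq_nonneg[of n "\<lambda>i. h i + (-3) * g i"] Lambda Psi
      by (smt (verit) divide_nonneg_pos mult_nonneg_nonneg)
    have e: "bf n Q (\<lambda>i. h i + (-3) * g i) (\<lambda>i. h i + (-3) * g i)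
       = bf n Q h h + (-3) * bf n Q h g + (-3) * bf n Q g h + (-3)^2 * bf n Q g g"
      by (rule bf_add)
    have "0 \<le> bf n Q h h + (-3) * bf n Q h g + (-3) * bf n Q g h + (-3)^2 * bf n Q g g"
      using nn unfolding e .
    moreover have "bf n Q h g = bf n Q g h" by (rule bf_sym[OF symQ])
    ultimately have "0 \<le> bf n Q h h - 6 * bf n Q g h + 9 * bf n Q g g" by simp
    then have D: "2/3 * bf n Q h h - 3 * bf n Q g g \<le> bf n Q h h - 2 * bf n Q g h" by linarith
    have npos: "0 < real n" using n_pos by simp
    have e1: "emp_norm n X (\<lambda>x. f x - pif0 x) = sqrt (nsq n h / real n)" unfolding h_def en ..
    have e2: "emp_norm n X (\<lambda>x. f0 x - pif0 x) = sqrt (nsq n g / real n)" unfolding g_def en ..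
    define eg where "eg = emp_norm n X (\<lambda>x. f0 x - pif0 x)"
    have gnn: "0 \<le> nsq n g / real n" using nsq_nonneg[of n g] npos by simp
    have hnn: "0 \<le> nsq n h / real n" using nsq_nonneg[of n h] npos by simp
    have eg0: "0 \<le> eg" unfolding eg_def e2 using gnn by simp
    have eg2: "nsq n g / real n = eg^2" unfolding eg_def e2 using gnn by simp
    have d2: "\<delta> / 2 < sqrt (nsq n h / real n)" "sqrt (nsq n h / real n) < \<delta>" using f e1 by auto
    have dpos: "0 < \<delta>" using d2 by linarith
    have "(\<delta> / 2)^2 < (sqrt (nsq n h / real n))^2"
      using d2 dpos by (intro power_strict_mono) auto
    then have Hb: "\<delta>^2 / 4 < nsq n h / real n" using hnn by (simp add: power_divide)
    have bh0: "\<Lambda>low / \<Psi>high * nsq n h \<le> bf n Q h h" using QB[of h] by blast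
    have "(\<Lambda>low / \<Psi>high * nsq n h) / real n \<le> bf n Q h h / real n"
      by (rule divide_right_mono[OF bh0]) (use npos in simp)
    then have bh: "\<Lambda>low / \<Psi>high * (nsq n h / real n) \<le> bf n Q h h / real n" by simp
    have bg0: "bf n Q g g \<le> \<Lambda>high / \<Psi>low * nsq n g" using QB[of g] by blast
    have "bf n Q g g / real n \<le> (\<Lambda>high / \<Psi>low * nsq n g) / real n"
      by (rule divide_right_mono[OF bg0]) (use npos in simp)
    then have bg: "bf n Q g g / real n \<le> \<Lambda>high / \<Psi>low * (nsq n g / real n)" by simp
    have fa: "c \<le> 2/3 * (bf n Q h h / real n) - 3 * (bf n Q g g / real n)"
      unfolding c_def
      by (rule final_arith[OF Psi Lambda dpos Hb eg0 eg2 _ bh bg]) (use delta in \<open>simp add: eg_def\<close>)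
    have "2/3 * (bf n Q h h / real n) - 3 * (bf n Q g g / real n)
        = (1 / real n) * (2/3 * bf n Q h h - 3 * bf n Q g g)" using npos by (simp add: field_simps)
    also have "\<dots> \<le> (1 / real n) * (bf n Q h h - 2 * bf n Q g h)"
      using D npos by (intro mult_left_mono) auto
    finally show ?thesis using fa diff by simp
  qed
  have "ereal (rp + c) \<le> (INF f\<in>?S. ereal (risk n X f0 S Q f))"
    by (rule INF_greatest) (use key in auto)
  then show ?thesis
    unfolding rp_def[symmetric] c_def[symmetric]
    by (cases "(INF f\<in>?S. ereal (risk n X f0 S Q f))" rule: ereal_cases) auto
qed

end
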